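(* There is an absolute constant $C$ such that for all positive integers $n$, $$s(n)\le 2^{2n+C}\sum_{a,b,c\in[n]}2^{-|c-(a+b)|}\,g(c-(a+b)-1).$$
   Context: $[n]=\{1,\dots,n\}$, $[n]_0=\{0,1,\dots,n\}$. $s(n)$ is the number of sum-free subsets (no $a,b,c$, not necessarily distinct, with $a+b=c$, coordinatewise addition) of $\{1,3,4\}\times[n]\subset\mathbb{Z}^2$. The function $g:\mathbb{Z}\to\mathbb{R}$ is defined for positive integers $m$ by $$g(m)=\sum 2^{-|(S_1+S_2)\cap[m]_0|},$$ the sum over all pairs of sets $S_1,S_2\subseteq[m]_0$ with $0\in S_1$, $0\in S_2$ and $m+1\notin S_1+S_2$ (where $S_1+S_2=\{u+v:u\in S_1,v\in S_2\}$), and $g(m)=1$ for integers $m\le0$. *)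

theory Defs
  imports Complex_Main
begin

definition sumset :: "int set \<Rightarrow> int set \<Rightarrow> int set" where
  "sumset A B = {u + v | u v. u \<in> A \<and> v \<in> B}"

definition sum_free2 :: "(int \<times> int) set \<Rightarrow> bool" where
  "sum_free2 S \<longleftrightarrow> \<not> (\<exists>a\<in>S. \<exists>b\<in>S. \<exists>c\<in>S. (fst a + fst b, snd a + snd b) = c)"

definition s :: "nat \<Rightarrow> nat" where
  "s n = card {S. S \<subseteq> ({1, 3, 4} \<times> {1..int n}) \<and> sum_free2 S}"

definition g :: "int \<Rightarrow> real" where
  "g m = (if m \<le> 0 then 1 else
     (\<Sum>P \<in> {(S1, S2). S1 \<subseteq> {0..m} \<and> S2 \<subseteq> {0..m} \<and> 0 \<in> S1 \<and> 0 \<in> S2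
                        \<and> m + 1 \<notin> sumset S1 S2}.
        2 powr (- real (card (sumset (fst P) (snd P) \<inter> {0..m})))))"

end

theory Submission imports Defs begin

lemma sum_UN_le:
  fixes f :: "'a \<Rightarrow> real"
  assumes "finite K" "\<And>i. i \<in> K \<Longrightarrow> finite (X i)" "\<And>x. 0 \<le> f x"
  shows "sum f (\<Union>i\<in>K. X i) \<le> (\<Sum>i\<in>K. sum f (X i))"
  using assms
proof (induction K rule: finite_induct)
  case empty then show ?case by simp
next
  case (insert k K)
  have fin: "finite (\<Union>i\<in>K. X i)" using insert by auto
  have "sum f (\<Union>i\<in>insert k K. X i) = sum f (X k \<union> (\<Union>i\<in>K. X i))" by simp
  also have "\<dots> = sum f (X k) + sum f (\<Union>i\<in>K. X i) - sum f (X k \<inter> (\<Union>i\<in>K. X i))"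
    using sum_Un[OF insert.prems(1)[of k] fin] by simp
  also have "\<dots> \<le> sum f (X k) + sum f (\<Union>i\<in>K. X i)"
    using sum_nonneg[of _ f] insert.prems(2) by (simp add: sum_nonneg)
  also have "\<dots> \<le> sum f (X k) + (\<Sum>i\<in>K. sum f (X i))"
    using insert by simp
  finally show ?case using insert by simp
qed

definition rows :: "(int \<times> int) set \<Rightarrow> (int set \<times> int set) \<times> int set" where
  "rows S = (({x. (1,x) \<in> S}, {x. (3,x) \<in> S}), {x. (4,x) \<in> S})"

definition T :: "nat \<Rightarrow> ((int set \<times> int set) \<times> int set) set" where
  "T n = (SIGMA p : Pow {1..int n} \<times> Pow {1..int n}. Pow ({1..int n} - sumset (fst p) (snd p)))"

lemma sum_free2_iff:
  assumes "S \<subseteq> {1,3,4} \<times> UNIV"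
  shows "sum_free2 S \<longleftrightarrow> (\<forall>x y. (1,x) \<in> S \<longrightarrow> (3,y) \<in> S \<longrightarrow> (4,x+y) \<notin> S)"
proof
  assume "sum_free2 S"
  then show "\<forall>x y. (1,x) \<in> S \<longrightarrow> (3,y) \<in> S \<longrightarrow> (4,x+y) \<notin> S"
  proof (intro allI impI notI)
    fix x y assume "(1::int,x) \<in> S" "(3::int,y) \<in> S" "(4::int,x+y) \<in> S"
    moreover have "(fst (1::int,x) + fst (3::int,y), snd (1::int,x) + snd (3::int,y)) = (4::int, x+y)" by simp
    ultimately show False using \<open>sum_free2 S\<close> unfolding sum_free2_def by blast
  qed
next
  assume H: "\<forall>x y. (1,x) \<in> S \<longrightarrow> (3,y) \<in> S \<longrightarrow> (4,x+y) \<notin> S"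
  show "sum_free2 S" unfolding sum_free2_def
  proof (intro notI, elim bexE)
    fix a b c assume abc: "a \<in> S" "b \<in> S" "c \<in> S" "(fst a + fst b, snd a + snd b) = c"
    have fa: "fst a \<in> {1,3,4}" and fb: "fst b \<in> {1,3,4}" and fc: "fst c \<in> {1,3,4}"
      using abc assms by auto
    have "fst c = fst a + fst b" using abc(4) by auto
    then have "(fst a = 1 \<and> fst b = 3) \<or> (fst a = 3 \<and> fst b = 1)"
      using fa fb fc by auto
    then show False
    proof
      assume "fst a = 1 \<and> fst b = 3"
      moreover have "fst c = 4" using abc(4) calculation by auto
      ultimately show False using H abc
        by (metis fst_conv prod.collapse snd_conv)
    next
      assume "fst a = 3 \<and> fst b = 1"
      moreover have "fst c = 4" using abc(4) calculation by auto
      ultimately show False using H abc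
        by (metis add.commute fst_conv prod.collapse snd_conv)
    qed
  qed
qed

lemma s_eq_card_T: "s n = card (T n)"
proof -
  let ?I = "{1..int n}"
  let ?SF = "{S. S \<subseteq> ({1, 3, 4} \<times> ?I) \<and> sum_free2 S}"
  let ?inv = "\<lambda>q::(int set \<times> int set) \<times> int set. ({1::int} \<times> fst (fst q)) \<union> ({3::int} \<times> snd (fst q)) \<union> ({4::int} \<times> snd q)"
  have inv1: "?inv (rows S) = S" if "S \<subseteq> {1,3,4} \<times> UNIV" for S
    using that unfolding rows_def by auto
  have inj: "inj_on rows ?SF"
  proof (rule inj_onI)
    fix S S' assume "S \<in> ?SF" "S' \<in> ?SF" "rows S = rows S'"
    then have a: "S \<subseteq> {1,3,4} \<times> UNIV" "S' \<subseteq> {1,3,4} \<times> UNIV" "rows S = rows S'" by auto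
    have "S = ?inv (rows S)" using inv1[OF a(1)] by simp
    also have "\<dots> = ?inv (rows S')" using a(3) by simp
    also have "\<dots> = S'" using inv1[OF a(2)] by simp
    finally show "S = S'" .
  qed
  have img: "rows ` ?SF = T n"
  proof
    show "rows ` ?SF \<subseteq> T n"
    proof
      fix q assume "q \<in> rows ` ?SF"
      then obtain S where S: "S \<in> ?SF" "q = rows S" by auto
      then have sf: "\<forall>x y. (1,x) \<in> S \<longrightarrow> (3,y) \<in> S \<longrightarrow> (4,x+y) \<notin> S"
        using sum_free2_iff[of S] by blast
      have r: "q = (({x. (1,x) \<in> S}, {x. (3,x) \<in> S}), {x. (4,x) \<in> S})"
        using S(2) unfolding rows_def by simp
      have sub: "S \<subseteq> {1,3,4} \<times> ?I" using S(1) by simp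
      have A1: "{x. (1,x) \<in> S} \<subseteq> ?I" using sub by blast
      have A3: "{x. (3,x) \<in> S} \<subseteq> ?I" using sub by blast
      have A4: "{x. (4,x) \<in> S} \<subseteq> ?I - sumset {x. (1,x) \<in> S} {x. (3,x) \<in> S}"
        using sub sf unfolding sumset_def by blast
      show "q \<in> T n" unfolding r T_def using A1 A3 A4 by simp
    qed
  next
    show "T n \<subseteq> rows ` ?SF"
    proof
      fix q assume q: "q \<in> T n"
      have sub: "?inv q \<subseteq> {1,3,4} \<times> ?I" using q unfolding T_def by auto
      have sub2: "?inv q \<subseteq> {1,3,4} \<times> UNIV" using sub by auto
      have sf: "sum_free2 (?inv q)"
        unfolding sum_free2_iff[OF sub2]
      proof (intro allI impI notI)
        fix x y assume "(1, x) \<in> ?inv q" "(3, y) \<in> ?inv q" "(4, x + y) \<in> ?inv q"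
        then have "x \<in> fst (fst q)" "y \<in> snd (fst q)" "x + y \<in> snd q" by auto
        moreover have "snd q \<subseteq> ?I - sumset (fst (fst q)) (snd (fst q))"
          using q unfolding T_def by auto
        ultimately show False unfolding sumset_def by blast
      qed
      have "rows (?inv q) = q" unfolding rows_def by (cases q) auto
      then show "q \<in> rows ` ?SF" using sub sf by (metis (mono_tags, lifting) image_eqI mem_Collect_eq)
    qed
  qed
  show ?thesis unfolding s_def using bij_betw_same_card[of rows ?SF "T n"] inj img
    unfolding bij_betw_def by simp
qed

definition w :: "nat \<Rightarrow> int set \<times> int set \<Rightarrow> real" where
  "w n p = 2 ^ card ({1..int n} - sumset (fst p) (snd p))"

lemma s_eq_sum: "real (s n) = (\<Sum>p \<in> Pow {1..int n} \<times> Pow {1..int n}. w n p)"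
  unfolding s_eq_card_T T_def w_def
  by (subst card_SigmaI) (auto simp: card_Pow)

definition X :: "nat \<Rightarrow> int \<Rightarrow> int \<Rightarrow> int \<Rightarrow> (int set \<times> int set) set" where
  "X n a b c = {p \<in> Pow {1..int n} \<times> Pow {1..int n}. a \<in> fst p \<and> fst p \<subseteq> {a..int n} \<and> b \<in> snd p \<and> snd p \<subseteq> {b..int n}
     \<and> (c \<notin> sumset (fst p) (snd p) \<or> c = a + b) \<and> (\<forall>x. c < x \<and> x \<le> int n \<longrightarrow> x \<in> sumset (fst p) (snd p))}"

definition Pset :: "int \<Rightarrow> (int set \<times> int set) set" where
  "Pset m = {(S1, S2). S1 \<subseteq> {0..m} \<and> S2 \<subseteq> {0..m} \<and> 0 \<in> S1 \<and> 0 \<in> S2 \<and> m + 1 \<notin> sumset S1 S2}"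

definition wt :: "int \<Rightarrow> int set \<times> int set \<Rightarrow> real" where
  "wt m P = 2 powr (- real (card (sumset (fst P) (snd P) \<inter> {0..m})))"

lemma g_alt: "g m = (if m \<le> 0 then 1 else sum (wt m) (Pset m))"
  unfolding g_def Pset_def wt_def by simp

lemma w_bound:
  assumes p: "p \<in> X n a b c" and ab: "a \<ge> 1" "b \<ge> 1" and c: "1 \<le> c" "c \<le> int n"
  shows "w n p \<le> 2 powr (real_of_int c - real (card (sumset (fst p) (snd p) \<inter> {a+b..c-1})))"
proof -
  let ?S = "sumset (fst p) (snd p)"
  let ?K = "?S \<inter> {a+b..c-1}"
  have up: "\<forall>x. c < x \<and> x \<le> int n \<longrightarrow> x \<in> ?S" using p unfolding X_def by blast
  have sub: "{1..int n} - ?S \<subseteq> {1..c} - ?K"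
  proof
    fix x assume "x \<in> {1..int n} - ?S"
    then have "1 \<le> x" "x \<le> int n" "x \<notin> ?S" by auto
    then have "x \<le> c" using up by force
    then show "x \<in> {1..c} - ?K" using \<open>1 \<le> x\<close> \<open>x \<notin> ?S\<close> by auto
  qed
  have Ksub: "?K \<subseteq> {1..c}" using ab by auto
  have "card ({1..int n} - ?S) \<le> card ({1..c} - ?K)" by (rule card_mono[OF _ sub]) simp
  also have "\<dots> = card {1..c} - card ?K" by (rule card_Diff_subset[OF _ Ksub]) (rule finite_subset[OF Ksub], simp)
  finally have le: "card ({1..int n} - ?S) \<le> nat c - card ?K" using c by simp
  have Kle: "card ?K \<le> nat c" using card_mono[OF _ Ksub] c by simp
  have "w n p = 2 ^ card ({1..int n} - ?S)" unfolding w_def by simp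
  also have "\<dots> \<le> (2::real) ^ (nat c - card ?K)" by (rule power_increasing[OF le]) simp
  also have "\<dots> = 2 powr (real (nat c - card ?K))" by (simp add: powr_realpow)
  also have "real (nat c - card ?K) = real_of_int c - real (card ?K)" using Kle c by simp
  finally show ?thesis .
qed

lemma finite_X: "finite (X n a b c)"
  unfolding X_def by (rule finite_subset[of _ "Pow {1..int n} \<times> Pow {1..int n}"]) auto

lemma w_nonneg: "0 \<le> w n p" unfolding w_def by simp

lemma card_Pow_int: "l \<le> u + 1 \<Longrightarrow> real (card (Pow {l..u::int})) = 2 powr (real_of_int (u - l + 1))"
  by (simp add: card_Pow powr_realpow[symmetric])

lemma sumX_low:
  assumes a: "a \<in> {1..int n}" and b: "b \<in> {1..int n}" and c: "c \<in> {1..int n}" and cab: "c \<le> a + b"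
  shows "sum (w n) (X n a b c) \<le> 4 * 2 ^ (2*n) * (2 powr (- real_of_int \<bar>c - (a + b)\<bar>) * g (c - (a + b) - 1))"
proof -
  have wb: "w n p \<le> 2 powr real_of_int c" if "p \<in> X n a b c" for p
  proof -
    have "{a+b..c-1} = {}" using cab by auto
    then show ?thesis using w_bound[OF that] a b c by simp
  qed
  have Xsub: "X n a b c \<subseteq> Pow {a..int n} \<times> Pow {b..int n}" unfolding X_def by auto
  have cardX: "real (card (X n a b c)) \<le> 2 powr (real_of_int (int n - a + 1)) * 2 powr (real_of_int (int n - b + 1))"
  proof -
    have "card (X n a b c) \<le> card (Pow {a..int n} \<times> Pow {b..int n})"
      by (rule card_mono[OF _ Xsub]) simp
    then have "real (card (X n a b c)) \<le> real (card (Pow {a..int n})) * real (card (Pow {b..int n}))"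
      unfolding card_cartesian_product by (metis of_nat_le_iff of_nat_mult)
    also have "\<dots> = 2 powr (real_of_int (int n - a + 1)) * 2 powr (real_of_int (int n - b + 1))"
      using a b by (simp add: card_Pow_int)
    finally show ?thesis .
  qed
  have "sum (w n) (X n a b c) \<le> real (card (X n a b c)) * 2 powr real_of_int c"
    using sum_bounded_above[of "X n a b c" "w n" "2 powr real_of_int c"] wb by simp
  also have "\<dots> \<le> 2 powr (real_of_int (int n - a + 1)) * 2 powr (real_of_int (int n - b + 1)) * 2 powr real_of_int c"
    by (rule mult_right_mono[OF cardX]) simp
  also have "\<dots> = 2 powr (real_of_int (2 * int n + 2 - (a + b - c)))"
    by (simp add: powr_add[symmetric] algebra_simps)
  also have "\<dots> = 4 * 2 ^ (2*n) * 2 powr (- real_of_int (a + b - c))"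
  proof -
    have e: "real_of_int (2 * int n + 2 - (a + b - c)) = 2 + real (2*n) + (- real_of_int (a + b - c))" by simp
    have "2 powr (real_of_int (2 * int n + 2 - (a + b - c))) = 2 powr 2 * 2 powr (real (2*n)) * 2 powr (- real_of_int (a + b - c))"
      unfolding e powr_add by simp
    moreover have "2 powr (2 * real n) = (2::real)^(2*n)" using powr_realpow[of 2 "2*n"] by simp
    ultimately show ?thesis by simp
  qed
  also have "\<dots> = 4 * 2 ^ (2*n) * (2 powr (- real_of_int \<bar>c - (a + b)\<bar>) * g (c - (a + b) - 1))"
    using cab by (simp add: g_def)
  finally show ?thesis .
qed

lemma finite_Pset: "finite (Pset m)"
  unfolding Pset_def by (rule finite_subset[of _ "Pow {0..m} \<times> Pow {0..m}"]) auto

lemma wt_nonneg: "0 \<le> wt m q" unfolding wt_def by simp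

lemma wt_le1: "wt m q \<le> 1"
proof -
  have "1 \<le> 2 powr real (card (sumset (fst q) (snd q) \<inter> {0..m}))" by (rule ge_one_powr_ge_zero) auto
  then show ?thesis unfolding wt_def by (simp add: powr_minus_divide)
qed

lemma sum_Pset_le_g: assumes "m \<ge> 0" shows "sum (wt m) (Pset m) \<le> g m"
proof (cases "m = 0")
  case True
  have sub: "Pset m \<subseteq> {({0},{0})}" unfolding Pset_def using True by auto
  have "card (Pset m) \<le> 1" using card_mono[OF _ sub] by simp
  have "sum (wt m) (Pset m) \<le> real (card (Pset m)) * 1"
    using sum_bounded_above[of "Pset m" "wt m" 1] wt_le1 by simp
  also have "\<dots> \<le> 1" using \<open>card (Pset m) \<le> 1\<close> by simp
  finally show ?thesis using True by (simp add: g_def)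
next
  case False
  then show ?thesis using assms by (simp add: g_alt)
qed

lemma sumX_high:
  assumes a: "a \<in> {1..int n}" and b: "b \<in> {1..int n}" and c: "c \<in> {1..int n}" and cab: "a + b < c"
  shows "sum (w n) (X n a b c) \<le> 4 * 2 ^ (2*n) * (2 powr (- real_of_int \<bar>c - (a + b)\<bar>) * g (c - (a + b) - 1))"
proof -
  define m where "m = c - (a + b) - 1"
  have m0: "m \<ge> 0" using cab m_def by simp
  define S1 where "S1 p = {x\<in>{0..m}. x + a \<in> fst p}" for p :: "int set \<times> int set"
  define S2 where "S2 p = {y\<in>{0..m}. y + b \<in> snd p}" for p :: "int set \<times> int set"
  define \<phi> where "\<phi> p = ((S1 p, S2 p), (fst p \<inter> {c-b..int n}, snd p \<inter> {c-a..int n}))" for p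
  have Xp: "a \<in> fst p" "fst p \<subseteq> {a..int n}" "b \<in> snd p" "snd p \<subseteq> {b..int n}"
     "c \<notin> sumset (fst p) (snd p)" if "p \<in> X n a b c" for p
    using that cab unfolding X_def by auto
  have card_eq: "card (sumset (fst p) (snd p) \<inter> {a+b..c-1}) = card (sumset (S1 p) (S2 p) \<inter> {0..m})"
    if p: "p \<in> X n a b c" for p
  proof -
    have eq: "sumset (S1 p) (S2 p) \<inter> {0..m} = (\<lambda>z. z - (a+b)) ` (sumset (fst p) (snd p) \<inter> {a+b..c-1})"
    proof
      show "sumset (S1 p) (S2 p) \<inter> {0..m} \<subseteq> (\<lambda>z. z - (a+b)) ` (sumset (fst p) (snd p) \<inter> {a+b..c-1})"
      proof
        fix z assume "z \<in> sumset (S1 p) (S2 p) \<inter> {0..m}"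
        then obtain u v where uv: "z = u + v" "u \<in> S1 p" "v \<in> S2 p" "0 \<le> z" "z \<le> m"
          unfolding sumset_def by auto
        have "z + (a+b) = (u + a) + (v + b)" using uv by simp
        moreover have "u + a \<in> fst p" "v + b \<in> snd p" using uv unfolding S1_def S2_def by auto
        ultimately have "z + (a+b) \<in> sumset (fst p) (snd p)" unfolding sumset_def by blast
        moreover have "z + (a+b) \<in> {a+b..c-1}" using uv m_def by auto
        ultimately show "z \<in> (\<lambda>z. z - (a+b)) ` (sumset (fst p) (snd p) \<inter> {a+b..c-1})"
          by (intro image_eqI[of _ _ "z + (a+b)"]) auto
      qed
    next
      show "(\<lambda>z. z - (a+b)) ` (sumset (fst p) (snd p) \<inter> {a+b..c-1}) \<subseteq> sumset (S1 p) (S2 p) \<inter> {0..m}"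
      proof
        fix z' assume "z' \<in> (\<lambda>z. z - (a+b)) ` (sumset (fst p) (snd p) \<inter> {a+b..c-1})"
        then obtain z where z: "z' = z - (a+b)" "z \<in> sumset (fst p) (snd p)" "a + b \<le> z" "z \<le> c - 1" by auto
        then obtain u v where uv: "z = u + v" "u \<in> fst p" "v \<in> snd p" unfolding sumset_def by auto
        have "u \<ge> a" "v \<ge> b" using uv Xp[OF p] by auto
        then have "u - a \<in> S1 p" "v - b \<in> S2 p" using uv z m_def unfolding S1_def S2_def by auto
        moreover have "z' = (u - a) + (v - b)" using z uv by simp
        ultimately have "z' \<in> sumset (S1 p) (S2 p)" unfolding sumset_def by blast
        then show "z' \<in> sumset (S1 p) (S2 p) \<inter> {0..m}" using z m_def by auto
      qed
    qed
    have "inj_on (\<lambda>z. z - (a+b)) (sumset (fst p) (snd p) \<inter> {a+b..c-1})" by (rule inj_onI) simp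
    then show ?thesis unfolding eq by (simp add: card_image)
  qed
  have wle: "w n p \<le> 2 powr real_of_int c * wt m (fst (\<phi> p))" if p: "p \<in> X n a b c" for p
  proof -
    have "w n p \<le> 2 powr (real_of_int c - real (card (sumset (S1 p) (S2 p) \<inter> {0..m})))"
      using w_bound[OF p] a b c card_eq[OF p] by simp
    also have "\<dots> = 2 powr real_of_int c * wt m (fst (\<phi> p))"
      unfolding wt_def \<phi>_def by (simp add: powr_diff powr_minus divide_inverse)
    finally show ?thesis .
  qed
  have rec1: "fst p = {x. x - a \<in> S1 p} \<union> (fst p \<inter> {c-b..int n})" if p: "p \<in> X n a b c" for p
  proof
    show "fst p \<subseteq> {x. x - a \<in> S1 p} \<union> (fst p \<inter> {c-b..int n})"
    proof
      fix x assume x: "x \<in> fst p"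
      then have "a \<le> x" "x \<le> int n" using Xp[OF p] by auto
      then show "x \<in> {x. x - a \<in> S1 p} \<union> (fst p \<inter> {c-b..int n})"
        using x m_def unfolding S1_def by auto
    qed
  next
    show "{x. x - a \<in> S1 p} \<union> (fst p \<inter> {c-b..int n}) \<subseteq> fst p" unfolding S1_def by auto
  qed
  have rec2: "snd p = {x. x - b \<in> S2 p} \<union> (snd p \<inter> {c-a..int n})" if p: "p \<in> X n a b c" for p
  proof
    show "snd p \<subseteq> {x. x - b \<in> S2 p} \<union> (snd p \<inter> {c-a..int n})"
    proof
      fix x assume x: "x \<in> snd p"
      then have "b \<le> x" "x \<le> int n" using Xp[OF p] by auto
      then show "x \<in> {x. x - b \<in> S2 p} \<union> (snd p \<inter> {c-a..int n})"
        using x m_def unfolding S2_def by auto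
    qed
  next
    show "{x. x - b \<in> S2 p} \<union> (snd p \<inter> {c-a..int n}) \<subseteq> snd p" unfolding S2_def by auto
  qed
  have inj: "inj_on \<phi> (X n a b c)"
  proof (rule inj_onI)
    fix p q assume p: "p \<in> X n a b c" and q: "q \<in> X n a b c" and e: "\<phi> p = \<phi> q"
    then have e1: "S1 p = S1 q" "S2 p = S2 q" "fst p \<inter> {c-b..int n} = fst q \<inter> {c-b..int n}"
      "snd p \<inter> {c-a..int n} = snd q \<inter> {c-a..int n}" unfolding \<phi>_def by auto
    have "fst p = fst q" using rec1[OF p] rec1[OF q] e1 by simp
    moreover have "snd p = snd q" using rec2[OF p] rec2[OF q] e1 by simp
    ultimately show "p = q" by (simp add: prod_eq_iff)
  qed
  have img: "\<phi> ` X n a b c \<subseteq> Pset m \<times> (Pow {c-b..int n} \<times> Pow {c-a..int n})"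
  proof
    fix q assume "q \<in> \<phi> ` X n a b c"
    then obtain p where p: "p \<in> X n a b c" and q: "q = \<phi> p" by auto
    have "0 \<in> S1 p" "0 \<in> S2 p" using Xp[OF p] m0 unfolding S1_def S2_def by auto
    moreover have "m + 1 \<notin> sumset (S1 p) (S2 p)"
    proof
      assume "m + 1 \<in> sumset (S1 p) (S2 p)"
      then obtain u v where uv: "m + 1 = u + v" "u \<in> S1 p" "v \<in> S2 p" unfolding sumset_def by auto
      have "c = (u + a) + (v + b)" using uv(1) m_def by simp
      moreover have "u + a \<in> fst p" "v + b \<in> snd p" using uv unfolding S1_def S2_def by auto
      ultimately have "c \<in> sumset (fst p) (snd p)" unfolding sumset_def by blast
      then show False using Xp(5)[OF p] by simp
    qed
    moreover have "S1 p \<subseteq> {0..m}" "S2 p \<subseteq> {0..m}" unfolding S1_def S2_def by auto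
    ultimately show "q \<in> Pset m \<times> (Pow {c-b..int n} \<times> Pow {c-a..int n})"
      unfolding q \<phi>_def Pset_def by auto
  qed
  let ?h = "\<lambda>q. 2 powr real_of_int c * wt m (fst q)"
  let ?B = "Pow {c-b..int n} \<times> Pow {c-a..int n}"
  have "sum (w n) (X n a b c) \<le> sum (?h \<circ> \<phi>) (X n a b c)"
    by (rule sum_mono) (simp add: wle)
  also have "\<dots> = sum ?h (\<phi> ` X n a b c)" by (rule sum.reindex[OF inj, symmetric])
  also have "\<dots> \<le> sum ?h (Pset m \<times> ?B)"
    by (rule sum_mono2[OF _ img]) (auto simp: finite_Pset wt_nonneg)
  also have "\<dots> = (\<Sum>(x,y)\<in>Pset m \<times> ?B. 2 powr real_of_int c * wt m x)"
    by (simp add: case_prod_beta)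
  also have "\<dots> = (\<Sum>x\<in>Pset m. \<Sum>y\<in>?B. 2 powr real_of_int c * wt m x)"
    by (rule sum.cartesian_product[symmetric])
  also have "\<dots> = (\<Sum>x\<in>Pset m. real (card ?B) * (2 powr real_of_int c * wt m x))" by simp
  also have "\<dots> = real (card ?B) * 2 powr real_of_int c * sum (wt m) (Pset m)"
    by (simp add: sum_distrib_left mult.assoc)
  also have "\<dots> \<le> real (card ?B) * 2 powr real_of_int c * g m"
    by (rule mult_left_mono[OF sum_Pset_le_g[OF m0]]) simp
  also have "real (card ?B) = 2 powr (real_of_int (int n - (c-b) + 1)) * 2 powr (real_of_int (int n - (c-a) + 1))"
    using a b c cab unfolding card_cartesian_product by (simp add: card_Pow_int)
  also have "2 powr (real_of_int (int n - (c-b) + 1)) * 2 powr (real_of_int (int n - (c-a) + 1)) * 2 powr real_of_int c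
      = 2 powr 2 * 2 powr (real (2*n)) * 2 powr (- real_of_int \<bar>c - (a + b)\<bar>)"
  proof -
    have e: "real_of_int (int n - (c-b) + 1) + real_of_int (int n - (c-a) + 1) + real_of_int c = 2 + real (2*n) + (- real_of_int \<bar>c - (a + b)\<bar>)"
      using cab by simp
    have "2 powr (real_of_int (int n - (c-b) + 1)) * 2 powr (real_of_int (int n - (c-a) + 1)) * 2 powr real_of_int c
       = (2::real) powr (real_of_int (int n - (c-b) + 1) + real_of_int (int n - (c-a) + 1) + real_of_int c)"
      by (simp only: powr_add)
    also have "\<dots> = 2 powr 2 * 2 powr (real (2*n)) * 2 powr (- real_of_int \<bar>c - (a + b)\<bar>)"
      unfolding e by (simp only: powr_add)
    finally show ?thesis .
  qed
  also have "2 powr (real (2*n)) = (2::real) ^ (2*n)" by (rule powr_realpow) simp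
  finally show ?thesis unfolding m_def by (simp add: algebra_simps)
qed

lemma sumX:
  assumes a: "a \<in> {1..int n}" and b: "b \<in> {1..int n}" and c: "c \<in> {1..int n}"
  shows "sum (w n) (X n a b c) \<le> 4 * 2 ^ (2*n) * (2 powr (- real_of_int \<bar>c - (a + b)\<bar>) * g (c - (a + b) - 1))"
proof (cases "c \<le> a + b")
  case True then show ?thesis using sumX_low[OF a b c] by simp
next
  case False then show ?thesis using sumX_high[OF a b c] by simp
qed

lemma cover:
  assumes p: "p \<in> Pow {1..int n} \<times> Pow {1..int n}" and ne: "fst p \<noteq> {}" "snd p \<noteq> {}"
  shows "\<exists>a\<in>{1..int n}. \<exists>b\<in>{1..int n}. \<exists>c\<in>{1..int n}. p \<in> X n a b c"
proof -
  let ?S = "sumset (fst p) (snd p)"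
  have f1: "finite (fst p)" "finite (snd p)" using p by (auto intro: finite_subset[of _ "{1..int n}"])
  define a where "a = Min (fst p)"
  define b where "b = Min (snd p)"
  have a1: "a \<in> fst p" "\<forall>x\<in>fst p. a \<le> x" using f1 ne unfolding a_def by auto
  have b1: "b \<in> snd p" "\<forall>x\<in>snd p. b \<le> x" using f1 ne unfolding b_def by auto
  have aI: "a \<in> {1..int n}" "b \<in> {1..int n}" using a1 b1 p by auto
  have Sge: "x \<ge> a + b" if "x \<in> ?S" for x
    using that a1 b1 unfolding sumset_def by force
  define A where "A = {x\<in>{1..int n}. x \<notin> ?S \<or> x = a + b}"
  have finA: "finite A" unfolding A_def by (rule finite_subset[of _ "{1..int n}"]) auto
  have neA: "A \<noteq> {}"
  proof (cases "a + b \<le> int n")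
    case True then have "a + b \<in> A" using aI unfolding A_def by auto
    then show ?thesis by auto
  next
    case False then have "int n \<in> A" using aI Sge unfolding A_def by force
    then show ?thesis by auto
  qed
  define c where "c = Max A"
  have cA: "c \<in> A" using Max_in[OF finA neA] c_def by simp
  have above: "\<forall>x. c < x \<and> x \<le> int n \<longrightarrow> x \<in> ?S"
  proof (intro allI impI)
    fix x assume x: "c < x \<and> x \<le> int n"
    show "x \<in> ?S"
    proof (rule ccontr)
      assume "x \<notin> ?S"
      then have "x \<in> A" using x cA unfolding A_def by auto
      then have "x \<le> c" using Max_ge[OF finA] c_def by simp
      then show False using x by simp
    qed
  qed
  have "p \<in> X n a b c"
    unfolding X_def using p a1 b1 aI cA above unfolding A_def by auto
  moreover have "c \<in> {1..int n}" using cA unfolding A_def by simp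
  ultimately show ?thesis using aI by blast
qed

lemma g_nonneg: "0 \<le> g m"
  unfolding g_alt by (auto intro: sum_nonneg wt_nonneg)

theorem mainTheorem10:
  shows "\<exists>C::real. \<forall>n::nat. n > 0 \<longrightarrow>
    real (s n) \<le> 2 powr (2 * real n + C) *
      (\<Sum>a\<in>{1..int n}. \<Sum>b\<in>{1..int n}. \<Sum>c\<in>{1..int n}.
         2 powr (- real_of_int \<bar>c - (a + b)\<bar>) * g (c - (a + b) - 1))"
proof (intro exI[of _ 3] allI impI)
  fix n :: nat assume n: "n > 0"
  let ?I = "{1..int n}"
  let ?\<tau> = "\<lambda>a b c. 2 powr (- real_of_int \<bar>c - (a + b)\<bar>) * g (c - (a + b) - 1)"
  let ?SS = "\<Sum>a\<in>?I. \<Sum>b\<in>?I. \<Sum>c\<in>?I. ?\<tau> a b c"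
  let ?PP = "Pow ?I \<times> Pow ?I"
  let ?N = "{p \<in> ?PP. fst p \<noteq> {} \<and> snd p \<noteq> {}}"
  have tau_nn: "0 \<le> ?\<tau> a b c" for a b c by (simp add: g_nonneg)
  have finPP: "finite ?PP" by simp
  have wle: "w n p \<le> 2 ^ n" if "p \<in> ?PP" for p
  proof -
    have "card (?I - sumset (fst p) (snd p)) \<le> card ?I" by (rule card_mono) auto
    then have "card (?I - sumset (fst p) (snd p)) \<le> n" by simp
    then show ?thesis unfolding w_def by (rule power_increasing) simp
  qed
  have split: "sum (w n) ?PP = sum (w n) (?PP - ?N) + sum (w n) ?N"
    by (rule sum.subset_diff) auto
  have E: "sum (w n) (?PP - ?N) \<le> 2 * 4 ^ n"
  proof -
    have Esub: "?PP - ?N \<subseteq> ({{}} \<times> Pow ?I) \<union> (Pow ?I \<times> {{}})" by auto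
    have "card (?PP - ?N) \<le> card (({{}} \<times> Pow ?I) \<union> (Pow ?I \<times> {{}}))"
      by (rule card_mono[OF _ Esub]) simp
    also have "\<dots> \<le> card ({{}::int set} \<times> Pow ?I) + card (Pow ?I \<times> {{}::int set})" by (rule card_Un_le)
    also have "\<dots> = 2 * 2 ^ n" by (simp add: card_cartesian_product card_Pow)
    finally have cE0: "card (?PP - ?N) \<le> 2 * 2 ^ n" .
    have cE: "real (card (?PP - ?N)) \<le> 2 * 2 ^ n"
    proof -
      have "real (card (?PP - ?N)) \<le> real (2 * 2 ^ n)" using cE0 by (simp only: of_nat_le_iff)
      then show ?thesis by simp
    qed
    have "sum (w n) (?PP - ?N) \<le> real (card (?PP - ?N)) * 2 ^ n"
      using sum_bounded_above[of "?PP - ?N" "w n" "2 ^ n"] wle by simp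
    also have "\<dots> \<le> 2 * 2 ^ n * 2 ^ n" by (rule mult_right_mono[OF cE]) simp
    also have "\<dots> = 2 * 4 ^ n" by (simp add: power_mult_distrib[symmetric])
    finally show ?thesis .
  qed
  have Nsub: "?N \<subseteq> (\<Union>a\<in>?I. \<Union>b\<in>?I. \<Union>c\<in>?I. X n a b c)"
  proof
    fix p assume "p \<in> ?N"
    then have "p \<in> ?PP" "fst p \<noteq> {}" "snd p \<noteq> {}" by auto
    from cover[OF this] obtain a b c where "a \<in> ?I" "b \<in> ?I" "c \<in> ?I" "p \<in> X n a b c" by blast
    then show "p \<in> (\<Union>a\<in>?I. \<Union>b\<in>?I. \<Union>c\<in>?I. X n a b c)" by blast
  qed
  have finU: "finite (\<Union>a\<in>?I. \<Union>b\<in>?I. \<Union>c\<in>?I. X n a b c)" by (simp add: finite_X)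
  have Nb: "sum (w n) ?N \<le> 4 * 4 ^ n * ?SS"
  proof -
    have "sum (w n) ?N \<le> sum (w n) (\<Union>a\<in>?I. \<Union>b\<in>?I. \<Union>c\<in>?I. X n a b c)"
      by (rule sum_mono2[OF finU Nsub]) (simp add: w_nonneg)
    also have "\<dots> \<le> (\<Sum>a\<in>?I. sum (w n) (\<Union>b\<in>?I. \<Union>c\<in>?I. X n a b c))"
      by (rule sum_UN_le) (auto simp: finite_X w_nonneg)
    also have "\<dots> \<le> (\<Sum>a\<in>?I. \<Sum>b\<in>?I. sum (w n) (\<Union>c\<in>?I. X n a b c))"
      by (rule sum_mono, rule sum_UN_le) (auto simp: finite_X w_nonneg)
    also have "\<dots> \<le> (\<Sum>a\<in>?I. \<Sum>b\<in>?I. \<Sum>c\<in>?I. sum (w n) (X n a b c))"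
      by (rule sum_mono, rule sum_mono, rule sum_UN_le) (auto simp: finite_X w_nonneg)
    also have "\<dots> \<le> (\<Sum>a\<in>?I. \<Sum>b\<in>?I. \<Sum>c\<in>?I. 4 * 2 ^ (2*n) * ?\<tau> a b c)"
      by (rule sum_mono, rule sum_mono, rule sum_mono, rule sumX) auto
    also have "\<dots> = 4 * 4 ^ n * ?SS"
      by (simp add: sum_distrib_left power_mult)
    finally show ?thesis .
  qed
  have SS: "1/2 \<le> ?SS"
  proof -
    have one: "(1::int) \<in> ?I" using n by simp
    have t1: "?\<tau> 1 1 1 = 1/2" by (simp add: g_def powr_minus_divide)
    have "?\<tau> 1 1 1 \<le> (\<Sum>c\<in>?I. ?\<tau> 1 1 c)"
      by (rule member_le_sum[OF one]) (auto simp: g_nonneg)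
    also have "\<dots> \<le> (\<Sum>b\<in>?I. \<Sum>c\<in>?I. ?\<tau> 1 b c)"
      by (rule member_le_sum[OF one, of "\<lambda>b. \<Sum>c\<in>?I. ?\<tau> 1 b c"]) (auto intro!: sum_nonneg simp: g_nonneg finite_atLeastAtMost_int)
    also have "\<dots> \<le> ?SS"
      by (rule member_le_sum[OF one, of "\<lambda>a. \<Sum>b\<in>?I. \<Sum>c\<in>?I. ?\<tau> a b c"]) (auto intro!: sum_nonneg simp: g_nonneg)
    finally show ?thesis using t1 by simp
  qed
  have "real (s n) \<le> 2 * 4 ^ n + 4 * 4 ^ n * ?SS"
    using s_eq_sum[of n] split E Nb by linarith
  also have "\<dots> \<le> 8 * 4 ^ n * ?SS"
  proof -
    have "2 * (4::real) ^ n \<le> 4 * 4 ^ n * ?SS" using SS by simp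
    then show ?thesis by simp
  qed
  also have "8 * (4::real) ^ n = 2 powr (2 * real n + 3)"
  proof -
    have "(2::real) powr (2 * real n + 3) = 2 powr (real (2*n)) * 2 powr 3" by (simp add: powr_add)
    also have "\<dots> = 2 ^ (2*n) * 8" using powr_realpow[of 2 "2*n"] by simp
    finally show ?thesis by (simp add: power_mult)
  qed
  finally show "real (s n) \<le> 2 powr (2 * real n + 3) * ?SS" .
qed

end
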